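(* Let $n\ge 3$, let $a<b<c$ be elements of $\mathcal{C}_n$ and let $k$ be an integer with $a+1\le k\le b$. Then the semiring $\mathcal{L}^{k}_{a}\left(\triangle^{(n)}\{a,b,c\}\right)=\{a_kb_{n-k-i}c_i:\ 0\le i\le n-k\}$ is isomorphic to the string $\mathcal{STR}^{(n-k)}\{b-k,c-k\}$.
   Context: For $N\ge1$, $\mathcal{C}_N=\{0,1,\dots,N-1\}$ with its usual order; $\widehat{\mathcal{E}}_{\mathcal{C}_N}$ is the set of all order-preserving maps $\mathcal{C}_N\to\mathcal{C}_N$ (not required to fix $0$), a semiring with $(\alpha+\beta)(x)=\max(\alpha(x),\beta(x))$ and $(\alpha\cdot\beta)(x)=\beta(\alpha(x))$. The notation $a_kb_\ell c_m$ (with $k+\ell+m=N$) denotes the map sending $0,\dots,k-1$ to $a$, the next $\ell$ elements to $b$ and the last $m$ to $c$. The triangle $\triangle^{(n)}\{a,b,c\}$ is the set of $\alpha\in\widehat{\mathcal{E}}_{\mathcal{C}_n}$ with image in $\{a,b,c\}$; its layer $\mathcal{L}^{k}_{a}$ is the set of elements mapping exactly $k$ elements to $a$ (a subsemiring for $a+1\le k\le b$). For $x<y$ in $\mathcal{C}_N$, the string $\mathcal{STR}^{(N)}\{x,y\}$ is the subsemiring of $\widehat{\mathcal{E}}_{\mathcal{C}_N}$ of maps with image in $\{x,y\}$. Isomorphism means semiring isomorphism (bijection preserving $+$ and $\cdot$). *)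

theory Defs
  imports Main
begin

text \<open>Maps C_N -> C_N are represented as functions nat => nat which vanish
  outside {0..<N} (extensional representation).\<close>

definition OP :: "nat \<Rightarrow> (nat \<Rightarrow> nat) set" where
  "OP N = {f. (\<forall>x<N. f x < N) \<and> (\<forall>x y. x \<le> y \<and> y < N \<longrightarrow> f x \<le> f y)
              \<and> (\<forall>x. N \<le> x \<longrightarrow> f x = 0)}"

definition padd :: "nat \<Rightarrow> (nat \<Rightarrow> nat) \<Rightarrow> (nat \<Rightarrow> nat) \<Rightarrow> nat \<Rightarrow> nat" where
  "padd N f g = (\<lambda>x. if x < N then max (f x) (g x) else 0)"

definition pmul :: "nat \<Rightarrow> (nat \<Rightarrow> nat) \<Rightarrow> (nat \<Rightarrow> nat) \<Rightarrow> nat \<Rightarrow> nat" where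
  "pmul N f g = (\<lambda>x. if x < N then g (f x) else 0)"

definition triangle :: "nat \<Rightarrow> nat \<Rightarrow> nat \<Rightarrow> nat \<Rightarrow> (nat \<Rightarrow> nat) set" where
  "triangle n a b c = {f \<in> OP n. \<forall>x<n. f x \<in> {a, b, c}}"

definition layer :: "nat \<Rightarrow> nat \<Rightarrow> nat \<Rightarrow> nat \<Rightarrow> nat \<Rightarrow> (nat \<Rightarrow> nat) set" where
  "layer n a b c k = {f \<in> triangle n a b c. card {x. x < n \<and> f x = a} = k}"

definition STRG :: "nat \<Rightarrow> nat \<Rightarrow> nat \<Rightarrow> (nat \<Rightarrow> nat) set" where
  "STRG N x y = {f \<in> OP N. \<forall>z<N. f z \<in> {x, y}}"

text \<open>The map a_k b_l c_m on C_N (m = N - k - l).\<close>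
definition abc :: "nat \<Rightarrow> nat \<Rightarrow> nat \<Rightarrow> nat \<Rightarrow> nat \<Rightarrow> nat \<Rightarrow> nat \<Rightarrow> nat" where
  "abc N a b c k l = (\<lambda>x. if x < k then a else if x < k + l then b else if x < N then c else 0)"

definition semiring_iso ::
  "'a set \<Rightarrow> ('a \<Rightarrow> 'a \<Rightarrow> 'a) \<Rightarrow> ('a \<Rightarrow> 'a \<Rightarrow> 'a) \<Rightarrow>
   'b set \<Rightarrow> ('b \<Rightarrow> 'b \<Rightarrow> 'b) \<Rightarrow> ('b \<Rightarrow> 'b \<Rightarrow> 'b) \<Rightarrow> ('a \<Rightarrow> 'b) \<Rightarrow> bool" where
  "semiring_iso A addA mulA B addB mulB \<phi> \<longleftrightarrow>
     bij_betw \<phi> A B \<and>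
     (\<forall>x\<in>A. \<forall>y\<in>A. \<phi> (addA x y) = addB (\<phi> x) (\<phi> y) \<and> \<phi> (mulA x y) = mulB (\<phi> x) (\<phi> y))"

end

theory Submission
  imports Defs
begin

lemma layer_char:
  fixes n a b c k :: nat
  assumes "a < b" "b < c" "c < n" "k \<le> n"
  shows "f \<in> layer n a b c k \<longleftrightarrow> f \<in> OP n \<and> (\<forall>x<k. f x = a) \<and> (\<forall>x. k \<le> x \<and> x < n \<longrightarrow> f x = b \<or> f x = c)"
proof
  assume f: "f \<in> layer n a b c k"
  let ?S = "{x. x < n \<and> f x = a}"
  have op: "f \<in> OP n" and vals: "\<forall>x<n. f x \<in> {a,b,c}" and cS: "card ?S = k"
    using f by (auto simp: layer_def triangle_def)
  have mono: "\<And>x y. x \<le> y \<Longrightarrow> y < n \<Longrightarrow> f x \<le> f y" using op by (auto simp: OP_def)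
  have ge: "\<And>x. x < n \<Longrightarrow> f x \<ge> a" using vals assms by fastforce
  have lowk: "f x = a" if "x < k" for x
  proof (rule ccontr)
    assume "f x \<noteq> a"
    hence "f x > a" using ge[of x] that assms by auto
    have "?S \<subseteq> {..<x}"
    proof
      fix y assume "y \<in> ?S"
      hence "y < n" "f y = a" by auto
      show "y \<in> {..<x}"
      proof (rule ccontr)
        assume "y \<notin> {..<x}" hence "x \<le> y" by auto
        with mono[OF this \<open>y<n\<close>] \<open>f x > a\<close> \<open>f y = a\<close> show False by auto
      qed
    qed
    hence "card ?S \<le> x" using card_mono[of "{..<x}" ?S] by auto
    with cS that show False by auto
  qed
  have highk: "f x \<noteq> a" if "k \<le> x" "x < n" for x
  proof
    assume fx: "f x = a"
    have "{..x} \<subseteq> ?S"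
    proof
      fix y assume "y \<in> {..x}"
      hence "y \<le> x" by auto
      with mono[OF this \<open>x<n\<close>] ge[of y] fx that show "y \<in> ?S" by auto
    qed
    hence "card {..x} \<le> card ?S" by (intro card_mono) auto
    with cS that show False by auto
  qed
  show "f \<in> OP n \<and> (\<forall>x<k. f x = a) \<and> (\<forall>x. k \<le> x \<and> x < n \<longrightarrow> f x = b \<or> f x = c)"
    using op lowk highk vals by auto
next
  assume h: "f \<in> OP n \<and> (\<forall>x<k. f x = a) \<and> (\<forall>x. k \<le> x \<and> x < n \<longrightarrow> f x = b \<or> f x = c)"
  have "{x. x < n \<and> f x = a} = {..<k}"
    using h assms by auto (metis not_le order_less_irrefl less_trans)
  moreover have "\<forall>x<n. f x \<in> {a,b,c}" using h by (metis insertCI not_le)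
  ultimately show "f \<in> layer n a b c k" using h by (auto simp: layer_def triangle_def)
qed

theorem proposition28:
  fixes n a b c k :: nat
  assumes "n \<ge> 3" and "a < b" and "b < c" and "c < n"
    and "a + 1 \<le> k" and "k \<le> b"
  shows "layer n a b c k = {abc n a b c k (n - k - i) | i. i \<le> n - k}
    \<and> (\<exists>\<phi>. semiring_iso (layer n a b c k) (padd n) (pmul n)
              (STRG (n - k) (b - k) (c - k)) (padd (n - k)) (pmul (n - k)) \<phi>)"
proof -
  have kn: "k \<le> n" using assms by auto
  note LC = layer_char[OF assms(2,3,4) kn]
  have part1: "layer n a b c k = {abc n a b c k (n - k - i) | i. i \<le> n - k}"
  proof
    show "layer n a b c k \<subseteq> {abc n a b c k (n - k - i) | i. i \<le> n - k}"
    proof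
      fix f assume "f \<in> layer n a b c k"
      hence op: "f \<in> OP n" and lo: "\<forall>x<k. f x = a" and hi: "\<forall>x. k \<le> x \<and> x < n \<longrightarrow> f x = b \<or> f x = c"
        using LC by auto
      have mono: "\<And>x y. x \<le> y \<Longrightarrow> y < n \<Longrightarrow> f x \<le> f y"
        and zero: "\<And>x. n \<le> x \<Longrightarrow> f x = 0" using op by (auto simp: OP_def)
      define m where "m = (if \<exists>x. k \<le> x \<and> x < n \<and> f x = c then LEAST x. k \<le> x \<and> x < n \<and> f x = c else n)"
      have km: "k \<le> m" and mn: "m \<le> n"
        unfolding m_def using kn by (auto intro: LeastI2_ex)
      have cpart: "f x = c" if "m \<le> x" "x < n" for x
      proof -
        have ex: "\<exists>x. k \<le> x \<and> x < n \<and> f x = c" using that mn unfolding m_def by (auto split: if_splits)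
        hence "k \<le> m \<and> m < n \<and> f m = c" unfolding m_def using LeastI_ex[OF ex] by simp
        with mono[OF that] hi that have "f x \<ge> c" by auto
        moreover have "k \<le> x" using km that by simp
        ultimately show ?thesis using hi that assms by fastforce
      qed
      have bpart: "f x = b" if "k \<le> x" "x < m" for x
      proof -
        have "f x \<noteq> c"
        proof
          assume fc: "f x = c"
          have xn: "x < n" using that mn by simp
          have ex: "\<exists>x. k \<le> x \<and> x < n \<and> f x = c" using fc that xn by (intro exI[of _ x]) simp
          have "m = (LEAST x. k \<le> x \<and> x < n \<and> f x = c)" unfolding m_def using ex by (rule if_P)
          also have "\<dots> \<le> x" using fc \<open>k \<le> x\<close> xn by (intro Least_le) blast
          finally have "m \<le> x" .
          with that show False by simp
        qed
        moreover have "x < n" using that mn by simp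
        ultimately show ?thesis using hi that by blast
      qed
      have "f = abc n a b c k (n - k - (n - m))"
      proof
        fix x show "f x = abc n a b c k (n - k - (n - m)) x"
          using lo bpart cpart zero km mn unfolding abc_def
          by (cases "x < k"; cases "x < m"; cases "x < n"; simp)
      qed
      moreover have "n - m \<le> n - k" using km by simp
      ultimately show "f \<in> {abc n a b c k (n - k - i) | i. i \<le> n - k}" by blast
    qed
  next
    show "{abc n a b c k (n - k - i) | i. i \<le> n - k} \<subseteq> layer n a b c k"
    proof clarify
      fix i assume "i \<le> n - k"
      let ?f = "abc n a b c k (n - k - i)"
      have "?f \<in> OP n" using assms unfolding OP_def abc_def by auto
      moreover have "\<forall>x<k. ?f x = a" by (simp add: abc_def)
      moreover have "\<forall>x. k \<le> x \<and> x < n \<longrightarrow> ?f x = b \<or> ?f x = c" by (simp add: abc_def)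
      ultimately show "?f \<in> layer n a b c k" using LC by blast
    qed
  qed
  define \<phi> where "\<phi> = (\<lambda>f::nat\<Rightarrow>nat. \<lambda>x. if x < n - k then f (x + k) - k else 0)"
  define \<psi> where "\<psi> = (\<lambda>h::nat\<Rightarrow>nat. \<lambda>x. if x < k then a else if x < n then h (x - k) + k else 0)"
  have inj: "inj_on \<phi> (layer n a b c k)"
  proof (rule inj_onI)
    fix f g assume f: "f \<in> layer n a b c k" and g: "g \<in> layer n a b c k" and e: "\<phi> f = \<phi> g"
    have opf: "f \<in> OP n" and lof: "\<forall>x<k. f x = a" and hif: "\<forall>x. k \<le> x \<and> x < n \<longrightarrow> f x = b \<or> f x = c"
      using f LC by blast+
    have opg: "g \<in> OP n" and log: "\<forall>x<k. g x = a" and hig: "\<forall>x. k \<le> x \<and> x < n \<longrightarrow> g x = b \<or> g x = c"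
      using g LC by blast+
    show "f = g"
    proof
      fix x
      show "f x = g x"
      proof (cases "x < k")
        case True thus ?thesis using lof log by simp
      next
        case False
        show ?thesis
        proof (cases "x < n")
          case True
          have "\<phi> f (x - k) = \<phi> g (x - k)" using e by simp
          moreover have "x - k < n - k" "x - k + k = x" using False True by simp_all
          ultimately have "f x - k = g x - k" unfolding \<phi>_def by simp
          moreover have "f x = b \<or> f x = c" "g x = b \<or> g x = c" using hif hig False True by simp_all
          hence "f x \<ge> k" "g x \<ge> k" using assms by auto
          ultimately show ?thesis by simp
        next
          case False thus ?thesis using opf opg by (simp add: OP_def)
        qed
      qed
    qed
  qed
  have img1: "\<phi> f \<in> STRG (n - k) (b - k) (c - k)" if f: "f \<in> layer n a b c k" for f
  proof -
    have op: "f \<in> OP n" and hi: "\<forall>x. k \<le> x \<and> x < n \<longrightarrow> f x = b \<or> f x = c"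
      using f LC by auto
    have mono: "\<And>x y. x \<le> y \<Longrightarrow> y < n \<Longrightarrow> f x \<le> f y" using op by (auto simp: OP_def)
    have vals: "\<And>x. x < n - k \<Longrightarrow> f (x + k) = b \<or> f (x + k) = c" using hi by auto
    have A: "\<forall>x<n - k. \<phi> f x < n - k"
    proof (intro allI impI)
      fix x assume x: "x < n - k"
      show "\<phi> f x < n - k" using vals[OF x] x assms unfolding \<phi>_def by auto
    qed
    have B: "\<forall>x y. x \<le> y \<and> y < n - k \<longrightarrow> \<phi> f x \<le> \<phi> f y"
    proof (intro allI impI)
      fix x y assume xy: "x \<le> y \<and> y < n - k"
      hence "f (x + k) \<le> f (y + k)" using mono[of "x+k" "y+k"] by linarith
      thus "\<phi> f x \<le> \<phi> f y" using xy unfolding \<phi>_def by simp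
    qed
    have C: "\<forall>x. n - k \<le> x \<longrightarrow> \<phi> f x = 0" unfolding \<phi>_def by simp
    have D: "\<forall>z<n - k. \<phi> f z \<in> {b - k, c - k}"
    proof (intro allI impI)
      fix z assume z: "z < n - k"
      show "\<phi> f z \<in> {b - k, c - k}" using vals[OF z] z unfolding \<phi>_def by auto
    qed
    show ?thesis unfolding STRG_def OP_def using A B C D by blast
  qed
  have img2: "h \<in> \<phi> ` layer n a b c k" if h: "h \<in> STRG (n - k) (b - k) (c - k)" for h
  proof -
    have hv: "\<And>z. z < n - k \<Longrightarrow> h z = b - k \<or> h z = c - k" using h by (auto simp: STRG_def)
    have hm: "\<And>x y. x \<le> y \<Longrightarrow> y < n - k \<Longrightarrow> h x \<le> h y"
      and hz: "\<And>x. n - k \<le> x \<Longrightarrow> h x = 0" using h by (auto simp: STRG_def OP_def)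
    have "\<psi> h \<in> layer n a b c k" unfolding LC
    proof (intro conjI allI impI)
      show "\<psi> h \<in> OP n" unfolding OP_def \<psi>_def
      proof (safe)
        fix x assume "x < n"
        show "(if x < k then a else if x < n then h (x - k) + k else 0) < n"
        proof (cases "x < k")
          case False
          hence "x - k < n - k" using \<open>x < n\<close> by simp
          hence "h (x - k) = b - k \<or> h (x - k) = c - k" by (rule hv)
          thus ?thesis using assms \<open>x < n\<close> False by auto
        qed (use assms kn in auto)
      next
        fix x y assume "x \<le> y" "y < n"
        show "(if x < k then a else if x < n then h (x - k) + k else 0) \<le> (if y < k then a else if y < n then h (y - k) + k else 0)"
          using hm[of "x - k" "y - k"] \<open>x \<le> y\<close> \<open>y < n\<close> assms by auto
      qed (use kn in auto)
    next
      fix x assume "x < k" thus "\<psi> h x = a" by (simp add: \<psi>_def)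
    next
      fix x assume xk: "k \<le> x \<and> x < n"
      hence "x - k < n - k" by auto
      hence "h (x - k) = b - k \<or> h (x - k) = c - k" by (rule hv)
      thus "\<psi> h x = b \<or> \<psi> h x = c" using xk assms unfolding \<psi>_def by auto
    qed
    moreover have "\<phi> (\<psi> h) = h"
    proof
      fix x show "\<phi> (\<psi> h) x = h x" unfolding \<phi>_def \<psi>_def using hz[of x] by auto
    qed
    ultimately show ?thesis by (metis image_eqI)
  qed
  have bij: "bij_betw \<phi> (layer n a b c k) (STRG (n - k) (b - k) (c - k))"
    unfolding bij_betw_def using inj img1 img2 by blast
  have hom: "\<phi> (padd n f g) = padd (n - k) (\<phi> f) (\<phi> g) \<and> \<phi> (pmul n f g) = pmul (n - k) (\<phi> f) (\<phi> g)"
    if f: "f \<in> layer n a b c k" and g: "g \<in> layer n a b c k" for f g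
  proof
    show "\<phi> (padd n f g) = padd (n - k) (\<phi> f) (\<phi> g)"
    proof
      fix x show "\<phi> (padd n f g) x = padd (n - k) (\<phi> f) (\<phi> g) x"
        unfolding \<phi>_def padd_def by (auto simp: max_def)
    qed
  next
    have hif: "\<And>x. x < n - k \<Longrightarrow> f (x + k) = b \<or> f (x + k) = c" using f LC by auto
    show "\<phi> (pmul n f g) = pmul (n - k) (\<phi> f) (\<phi> g)"
    proof
      fix x show "\<phi> (pmul n f g) x = pmul (n - k) (\<phi> f) (\<phi> g) x"
      proof (cases "x < n - k")
        case True
        have "f (x + k) \<ge> k" "f (x + k) < n" using hif[OF True] assms by auto
        thus ?thesis using True unfolding \<phi>_def pmul_def by auto
      next
        case False thus ?thesis unfolding \<phi>_def pmul_def by auto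
      qed
    qed
  qed
  show ?thesis using part1 bij hom unfolding semiring_iso_def by blast
qed

end
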